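(* Let $\mathcal{A}\subseteq\mathbb{R}^3$ and let $\varphi_1,\ldots,\varphi_N\in L^2(\mathcal{A})$ be pairwise non-parallel with $\boldsymbol{\Psi}=\int_{\mathcal{A}}\boldsymbol{\varphi}^{\mathsf{H}}\boldsymbol{\varphi}\,\mathrm{d}\mathbf{r}$ positive definite, $\boldsymbol{\varphi}(\mathbf{r})=[\varphi_1(\mathbf{r}),\ldots,\varphi_N(\mathbf{r})]$, and eigendecomposition $\boldsymbol{\Psi}=\mathbf{U}\,\mathrm{diag}(\lambda_1,\ldots,\lambda_N)\mathbf{U}^{\mathsf{H}}$, $\lambda_n>0$. For Hermitian $\mathbf{M}$ let $T_{\mathbf{M}}$ be the operator on $L^2(\mathcal{A})$ with kernel $\delta(\mathbf{r}-\mathbf{r}')-\boldsymbol{\varphi}(\mathbf{r})\mathbf{M}\boldsymbol{\varphi}^{\mathsf{H}}(\mathbf{r}')$. Let $\overline{B}_\varphi=T_{\overline{\mathbf{B}}_{\boldsymbol\Psi}}$ with $\overline{\mathbf{B}}_{\boldsymbol\Psi}=\mathbf{U}\,\mathrm{diag}\big(\tfrac{1+\sqrt{1+\lambda_n}}{\lambda_n\sqrt{1+\lambda_n}}\big)\mathbf{U}^{\mathsf{H}}$ and $B_\varphi=T_{\mathbf{B}_{\boldsymbol\Psi}}$ with $\mathbf{B}_{\boldsymbol\Psi}=\mathbf{U}\,\mathrm{diag}\big(\tfrac{1+\sqrt{1+\lambda_n}}{\lambda_n}\big)\mathbf{U}^{\mathsf{H}}$. Then $\overline{B}_\varphi B_\varphi=B_\varphi\overline{B}_\varphi=\mathrm{Id}$,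 i.e. $\int_{\mathcal{A}}\overline{B}_\varphi(\mathbf{r}_1,\mathbf{r})B_\varphi(\mathbf{r},\mathbf{r}_2)\,\mathrm{d}\mathbf{r}=\int_{\mathcal{A}}B_\varphi(\mathbf{r}_2,\mathbf{r})\overline{B}_\varphi(\mathbf{r},\mathbf{r}_1)\,\mathrm{d}\mathbf{r}=\delta(\mathbf{r}_1-\mathbf{r}_2)$.
   Context: Kernels containing $\delta(\mathbf{r}-\mathbf{r}')$ denote the identity plus a finite-rank integral operator. *)

theory Defs
  imports "HOL-Analysis.Analysis"
begin

definition L2 :: "(real^3) set \<Rightarrow> (real^3 \<Rightarrow> complex) \<Rightarrow> bool" where
  "L2 A f \<longleftrightarrow> f \<in> borel_measurable (lebesgue_on A)
      \<and> integrable (lebesgue_on A) (\<lambda>r. (norm (f r))^2)"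

definition mat_adj :: "complex^'n^'n \<Rightarrow> complex^'n^'n" where
  "mat_adj U = (\<chi> i j. cnj (U $ j $ i))"

definition diag_mat :: "('n::finite \<Rightarrow> complex) \<Rightarrow> complex^'n^'n" where
  "diag_mat d = (\<chi> i j. if i = j then d i else 0)"

definition unitary :: "complex^'n::finite^'n \<Rightarrow> bool" where
  "unitary U \<longleftrightarrow> U ** mat_adj U = mat 1 \<and> mat_adj U ** U = mat 1"

definition hermitian :: "complex^'n^'n \<Rightarrow> bool" where
  "hermitian M \<longleftrightarrow> mat_adj M = M"

definition pos_def :: "complex^'n::finite^'n \<Rightarrow> bool" where
  "pos_def M \<longleftrightarrow> hermitian M \<and>
     (\<forall>x::complex^'n. x \<noteq> 0 \<longrightarrow>
        (let q = (\<Sum>i\<in>UNIV. \<Sum>j\<in>UNIV. cnj (x $ i) * M $ i $ j * x $ j) in Im q = 0 \<and> Re q > 0))"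

definition gram :: "(real^3) set \<Rightarrow> ('n::finite \<Rightarrow> real^3 \<Rightarrow> complex) \<Rightarrow> complex^'n^'n" where
  "gram A \<phi> = (\<chi> i j. integral\<^sup>L (lebesgue_on A) (\<lambda>r. cnj (\<phi> i r) * \<phi> j r))"

text \<open>Operator with kernel delta(r-r') - phi(r) M phi^H(r'), acting on functions on A.\<close>
definition T_op :: "(real^3) set \<Rightarrow> ('n::finite \<Rightarrow> real^3 \<Rightarrow> complex) \<Rightarrow> complex^'n^'n
     \<Rightarrow> (real^3 \<Rightarrow> complex) \<Rightarrow> (real^3 \<Rightarrow> complex)" where
  "T_op A \<phi> M f = (\<lambda>r. f r - (\<Sum>i\<in>UNIV. \<Sum>j\<in>UNIV. \<phi> i r * M $ i $ j *
       integral\<^sup>L (lebesgue_on A) (\<lambda>r'. cnj (\<phi> j r') * f r')))"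

definition non_parallel :: "(real^3) set \<Rightarrow> ('n \<Rightarrow> real^3 \<Rightarrow> complex) \<Rightarrow> bool" where
  "non_parallel A \<phi> \<longleftrightarrow> (\<forall>i j. i \<noteq> j \<longrightarrow>
      \<not> (\<exists>c::complex. AE r in lebesgue_on A. \<phi> i r = c * \<phi> j r))"

end

theory Submission
  imports Defs
begin

definition cvec :: "(real^3) set \<Rightarrow> ('n::finite \<Rightarrow> real^3 \<Rightarrow> complex) \<Rightarrow> (real^3 \<Rightarrow> complex) \<Rightarrow> complex^'n" where
  "cvec A \<phi> f = (\<chi> j. integral\<^sup>L (lebesgue_on A) (\<lambda>r. cnj (\<phi> j r) * f r))"

lemma int_prod:
  assumes "L2 A f" "L2 A g"
  shows "integrable (lebesgue_on A) (\<lambda>r. cnj (f r) * g r)"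
proof (rule Bochner_Integration.integrable_bound[where f="\<lambda>r. (norm (f r))^2 + (norm (g r))^2"])
  show "integrable (lebesgue_on A) (\<lambda>r. (norm (f r))^2 + (norm (g r))^2)"
    using assms by (auto simp: L2_def)
  show "(\<lambda>r. cnj (f r) * g r) \<in> borel_measurable (lebesgue_on A)"
  proof (rule borel_measurable_times)
    have f: "f \<in> borel_measurable (lebesgue_on A)" and g: "g \<in> borel_measurable (lebesgue_on A)"
      using assms unfolding L2_def by auto
    show "(\<lambda>r. cnj (f r)) \<in> borel_measurable (lebesgue_on A)"
      by (rule borel_measurable_continuous_on[OF _ f]) (intro continuous_intros)
    show "g \<in> borel_measurable (lebesgue_on A)" by (rule g)
  qed
  show "AE x in lebesgue_on A. norm (cnj (f x) * g x) \<le> norm ((norm (f x))^2 + (norm (g x))^2)"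
  proof (rule AE_I2)
    fix x
    have "norm (f x) * norm (g x) \<le> (norm (f x))^2 + (norm (g x))^2"
    proof -
      have e: "(norm (f x) - norm (g x))^2 = (norm (f x))^2 - 2*(norm (f x) * norm (g x)) + (norm (g x))^2"
        by (simp add: power2_diff)
      have "0 \<le> (norm (f x) - norm (g x))^2" by simp
      moreover have "0 \<le> norm (f x) * norm (g x)" by simp
      ultimately show ?thesis using e by linarith
    qed
    then show "norm (cnj (f x) * g x) \<le> norm ((norm (f x))^2 + (norm (g x))^2)"
      by (simp add: norm_mult)
  qed
qed

lemma T_eq: "T_op A \<phi> M f = (\<lambda>r. f r - (\<Sum>i\<in>UNIV. \<phi> i r * (M *v cvec A \<phi> f) $ i))"
  unfolding T_op_def matrix_vector_mult_def cvec_def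
  by (simp add: sum_distrib_left mult.assoc)

lemma c_lin:
  assumes "\<And>i. L2 A (\<phi> i)" "L2 A f"
  shows "cvec A \<phi> (\<lambda>r. f r - (\<Sum>i\<in>UNIV. \<phi> i r * a $ i)) = cvec A \<phi> f - gram A \<phi> *v a"
proof -
  have "integral\<^sup>L (lebesgue_on A) (\<lambda>r. cnj (\<phi> k r) * (f r - (\<Sum>i\<in>UNIV. \<phi> i r * a $ i)))
      = integral\<^sup>L (lebesgue_on A) (\<lambda>r. cnj (\<phi> k r) * f r)
        - (\<Sum>i\<in>UNIV. integral\<^sup>L (lebesgue_on A) (\<lambda>r. cnj (\<phi> k r) * \<phi> i r) * a $ i)" for k
  proof -
    have eq: "(\<lambda>r. cnj (\<phi> k r) * (f r - (\<Sum>i\<in>UNIV. \<phi> i r * a $ i)))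
       = (\<lambda>r. cnj (\<phi> k r) * f r - (\<Sum>i\<in>UNIV. cnj (\<phi> k r) * \<phi> i r * a $ i))"
      by (simp add: algebra_simps sum_distrib_left)
    have i1: "integrable (lebesgue_on A) (\<lambda>r. cnj (\<phi> k r) * f r)"
      using assms int_prod by blast
    have i2: "integrable (lebesgue_on A) (\<lambda>r. cnj (\<phi> k r) * \<phi> i r * a $ i)" for i
      using int_prod[OF assms(1) assms(1)] by (intro integrable_mult_left) 
    have i3: "integrable (lebesgue_on A) (\<lambda>r. \<Sum>i\<in>UNIV. cnj (\<phi> k r) * \<phi> i r * a $ i)"
      using i2 by (intro Bochner_Integration.integrable_sum) auto
    have "integral\<^sup>L (lebesgue_on A) (\<lambda>r. cnj (\<phi> k r) * f r - (\<Sum>i\<in>UNIV. cnj (\<phi> k r) * \<phi> i r * a $ i))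
      = integral\<^sup>L (lebesgue_on A) (\<lambda>r. cnj (\<phi> k r) * f r) - integral\<^sup>L (lebesgue_on A) (\<lambda>r. \<Sum>i\<in>UNIV. cnj (\<phi> k r) * \<phi> i r * a $ i)"
      by (rule Bochner_Integration.integral_diff[OF i1 i3])
    also have "integral\<^sup>L (lebesgue_on A) (\<lambda>r. \<Sum>i\<in>UNIV. cnj (\<phi> k r) * \<phi> i r * a $ i)
       = (\<Sum>i\<in>UNIV. integral\<^sup>L (lebesgue_on A) (\<lambda>r. cnj (\<phi> k r) * \<phi> i r * a $ i))"
      by (rule Bochner_Integration.integral_sum) (use i2 in auto)
    finally show ?thesis unfolding eq by simp
  qed
  then show ?thesis
    by (simp add: vec_eq_iff cvec_def gram_def matrix_vector_mult_def)
qed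

lemma diag_mul: "diag_mat d ** diag_mat e = diag_mat (\<lambda>n. d n * e n)"
proof -
  have "(\<Sum>k\<in>UNIV. (if i = k then d i else 0) * (if k = j then e k else 0)) = (if i = j then d i * e i else 0)" for i j
  proof -
    have "(\<Sum>k\<in>UNIV. (if i = k then d i else 0) * (if k = j then e k else 0))
        = (\<Sum>k\<in>UNIV. if k = i then (if i = j then d i * e i else 0) else 0)"
      by (rule sum.cong) auto
    then show ?thesis by simp
  qed
  then show ?thesis by (simp add: vec_eq_iff diag_mat_def matrix_matrix_mult_def)
qed

lemma mat_add_rdistrib: "((A::'a::semiring_1^'n^'m) + B) ** (C::'a^'p^'n) = A ** C + B ** C"
  by (simp add: vec_eq_iff matrix_matrix_mult_def sum.distrib[symmetric] distrib_right)

lemma diag_add: "diag_mat d + diag_mat e = diag_mat (\<lambda>n. d n + e n)"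
  by (simp add: vec_eq_iff diag_mat_def)

lemma conj3:
  assumes "unitary U"
  shows "(U ** D1 ** mat_adj U) ** (U ** D2 ** mat_adj U) ** (U ** D3 ** mat_adj U)
     = U ** (D1 ** D2 ** D3) ** mat_adj U"
proof -
  have u: "mat_adj U ** U = mat 1" using assms unitary_def by blast
  have "(U ** D1 ** mat_adj U) ** (U ** D2 ** mat_adj U) = U ** (D1 ** D2) ** mat_adj U"
    by (simp add: matrix_mul_assoc) (metis matrix_mul_assoc matrix_mul_rid u)
  moreover have "(U ** (D1 ** D2) ** mat_adj U) ** (U ** D3 ** mat_adj U) = U ** (D1 ** D2 ** D3) ** mat_adj U"
    by (simp add: matrix_mul_assoc) (metis matrix_mul_assoc matrix_mul_rid u)
  ultimately show ?thesis by simp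
qed

lemma scal:
  fixes l :: real assumes "l > 0"
  shows "((1 + sqrt (1 + l)) / (l * sqrt (1 + l))) * l * ((1 + sqrt (1 + l)) / l)
    = (1 + sqrt (1 + l)) / l + (1 + sqrt (1 + l)) / (l * sqrt (1 + l))"
proof -
  have s: "sqrt (1 + l) > 0" "(sqrt (1 + l))^2 = 1 + l" using assms by auto
  show ?thesis using assms s by (simp add: field_simps power2_eq_square)
qed

theorem lemma7:
  fixes A :: "(real^3) set"
    and \<phi> :: "'n::finite \<Rightarrow> real^3 \<Rightarrow> complex"
    and U :: "complex^'n^'n"
    and lam :: "'n \<Rightarrow> real"
  assumes "A \<in> sets lebesgue"
    and "\<And>i. L2 A (\<phi> i)"
    and "non_parallel A \<phi>"
    and "pos_def (gram A \<phi>)"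
    and "unitary U"
    and "\<And>n. lam n > 0"
    and "gram A \<phi> = U ** diag_mat (\<lambda>n. complex_of_real (lam n)) ** mat_adj U"
  defines "Bbar \<equiv> U ** diag_mat (\<lambda>n. complex_of_real
              ((1 + sqrt (1 + lam n)) / (lam n * sqrt (1 + lam n)))) ** mat_adj U"
    and "B \<equiv> U ** diag_mat (\<lambda>n. complex_of_real ((1 + sqrt (1 + lam n)) / lam n)) ** mat_adj U"
  shows "\<forall>f. L2 A f \<longrightarrow>
           (\<forall>r\<in>A. T_op A \<phi> Bbar (T_op A \<phi> B f) r = f r) \<and>
           (\<forall>r\<in>A. T_op A \<phi> B (T_op A \<phi> Bbar f) r = f r)"
proof -
  define G where "G = gram A \<phi>"
  have sc: "complex_of_real ((1 + sqrt (1 + lam n)) / (lam n * sqrt (1 + lam n))) * complex_of_real (lam n)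
       * complex_of_real ((1 + sqrt (1 + lam n)) / lam n)
     = complex_of_real ((1 + sqrt (1 + lam n)) / lam n) + complex_of_real ((1 + sqrt (1 + lam n)) / (lam n * sqrt (1 + lam n)))" for n
    using scal[OF assms(6)[of n]] by (metis of_real_add of_real_mult)
  have sc2: "complex_of_real ((1 + sqrt (1 + lam n)) / lam n) * complex_of_real (lam n)
       * complex_of_real ((1 + sqrt (1 + lam n)) / (lam n * sqrt (1 + lam n)))
     = complex_of_real ((1 + sqrt (1 + lam n)) / (lam n * sqrt (1 + lam n))) + complex_of_real ((1 + sqrt (1 + lam n)) / lam n)" for n
    using sc[of n] by (simp only: ac_simps)
  have M1: "Bbar ** G ** B = B + Bbar"
    unfolding Bbar_def B_def G_def assms(7) conj3[OF assms(5)] diag_mul sc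
    by (simp add: matrix_add_ldistrib mat_add_rdistrib diag_add[symmetric])
  have M2: "B ** G ** Bbar = Bbar + B"
    unfolding Bbar_def B_def G_def assms(7) conj3[OF assms(5)] diag_mul sc2
    by (simp add: matrix_add_ldistrib mat_add_rdistrib diag_add[symmetric])
  have key: "T_op A \<phi> X (T_op A \<phi> Y f) r = f r"
    if L: "L2 A f" and MM: "X ** G ** Y = Y + X" for X Y f r
  proof -
    define c where "c = cvec A \<phi> f"
    have cc: "cvec A \<phi> (T_op A \<phi> Y f) = c - G *v (Y *v c)"
      unfolding T_eq c_def G_def by (rule c_lin[OF assms(2) L])
    have v: "Y *v c + X *v (c - G *v (Y *v c)) = 0"
    proof -
      have "X *v (G *v (Y *v c)) = Y *v c + X *v c"
        by (simp add: matrix_vector_mul_assoc matrix_mul_assoc MM matrix_vector_mult_add_rdistrib)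
      then show ?thesis by (simp add: matrix_vector_mult_diff_distrib)
    qed
    have "T_op A \<phi> X (T_op A \<phi> Y f) r
        = f r - (\<Sum>i\<in>UNIV. \<phi> i r * (Y *v c) $ i) - (\<Sum>i\<in>UNIV. \<phi> i r * (X *v (c - G *v (Y *v c))) $ i)"
      apply (subst T_eq) apply (subst cc) apply (subst T_eq)
      by (simp add: c_def)
    also have "\<dots> = f r - (\<Sum>i\<in>UNIV. \<phi> i r * (Y *v c + X *v (c - G *v (Y *v c))) $ i)"
      by (simp only: vector_add_component distrib_left sum.distrib diff_diff_eq)
    finally have "T_op A \<phi> X (T_op A \<phi> Y f) r
        = f r - (\<Sum>i\<in>UNIV. \<phi> i r * (Y *v c + X *v (c - G *v (Y *v c))) $ i)" .
    then show ?thesis using v by simp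
  qed
  show ?thesis using key M1 M2 by auto
qed

end
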